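(* Let $A$ be a satisfiable EFO branch. Then $A$ has a standard model $\mathcal{I}$ in which $\mathcal{I}\alpha$ is countable for every sort $\alpha$.
   Context: Types: a countable set of base types including a distinguished $o$; other base types are sorts ($\alpha$). Types: base types and $\sigma\tau$ (functions from $\sigma$ to $\tau$; $\sigma\tau\mu=\sigma(\tau\mu)$). Countably many names with unique types, infinitely many per type. Terms: names; $st:\mu$ for $s:\tau\mu,t:\tau$; $\lambda x.t:\sigma\tau$ for a name $x:\sigma$, $t:\tau$. Logical constants: $\neg:oo$, $\to:ooo$, $=_\sigma:\sigma\sigma o$ for every type $\sigma$, and $\forall_\alpha:(\alpha o)o$ for every sort $\alpha$; all other names are variables. Formulas: terms of type $o$; $s\neq_\sigma t$ is $\neg((=_\sigma s)t)$. A term is EFO if the only logical constants occurring in it are $\neg$, $\to$, $=_\alpha$ and $\forall_\alpha$ ($\alpha$ sorts). A formula is quasi-EFO if it is EFO or of the form $s\neq_\sigma t$ with $s,t$ EFO. Semantics: a frame $\mathcal{D}$ maps types to nonempty sets with $\mathcal{D}(\sigma\tau)\subseteq(\mathcal{D}\sigma\to\mathcal{D}\tau)$; standard if $\mathcal{D}(\sigma\tau)=(\mathcal{D}\sigma\to\mathcal{D}\tau)$. An assignment $\mathcal{I}$ into $\mathcal{D}$ extends $\mathcal{D}$ and maps names $x:\sigma$ into $\mathcal{D}\sigma$; $\mathcal{I}^x_a$ is the update. Partial evaluation: $\hat{\mathcal{I}}x=\mathcal{I}x$; $\hat{\mathcal{I}}(st)=(\hat{\mathcal{I}}s)(\hat{\mathcal{I}}t)$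 when defined; $\hat{\mathcal{I}}(\lambda x.s)=f$ if $\lambda x.s:\sigma\tau$, $f\in\mathcal{D}(\sigma\tau)$ and $\widehat{\mathcal{I}^x_a}s=fa$ for all $a\in\mathcal{D}\sigma$. An interpretation is an assignment with total evaluation. Logical: $\mathcal{I}o=\{0,1\}$, $\mathcal{I}(\neg)$ negation, $\mathcal{I}(\to)$ implication, $\mathcal{I}(=_\sigma)$ identity, $\mathcal{I}(\forall_\alpha)f=1$ iff $f$ is the constant function $1$. A set of formulas is satisfiable if some logical interpretation (into an arbitrary frame) evaluates each of them to $1$; a standard model is such a logical assignment into a standard frame. Normalization: fixed type-preserving total $[\cdot]$; $s$ normal iff $[s]=s$; (N1) $[[s]]=[s]$; (N2) $[[s]t]=[st]$; (N3) $[ys_1\dots s_n]=y[s_1]\dots[s_n]$ for a name $y$, $n\ge0$, $ys_1\dots s_n$ of base type; (N4) $\hat{\mathcal{I}}[s]=\hat{\mathcal{I}}s$ for every interpretation. Substitutions: type-preserving partial functions $\theta$ from names to terms ($\theta^x_s$ update), each extending to a type-preserving total $\hat\theta$ with (S1) $\hat\theta x=\theta x$ if $x\in\mathrm{Dom}\theta$, else $x$; (S2) $\hat\theta(st)=(\hat\theta s)(\hat\theta t)$; (S3) $[(\hat\theta(\lambda x.s))t]=[\widehat{\theta^x_t}s]$; (S4) $[\hat\emptyset s]=[s]$. An EFO branch is a set of normal quasi-EFO formulas. *)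

theory Defs
  imports Main "HOL-Library.Countable" "HOL-Library.Countable_Set"
begin

text \<open>Types. Base types are o ('TO') and the sorts ('TB a', with a ranging over
a countable type of sort labels). 'TF s t' is the function type s t.\<close>
datatype 's ty = TO | TB 's | TF "'s ty" "'s ty"

datatype 's name = NNeg | NImp | NEq "'s ty" | NAll 's | NVar "'s ty" nat

fun nty :: "'s name \<Rightarrow> 's ty" where
  "nty NNeg = TF TO TO"
| "nty NImp = TF TO (TF TO TO)"
| "nty (NEq \<sigma>) = TF \<sigma> (TF \<sigma> TO)"
| "nty (NAll a) = TF (TF (TB a) TO) TO"
| "nty (NVar \<sigma> n) = \<sigma>"

definition is_var :: "'s name \<Rightarrow> bool" where
  "is_var x \<longleftrightarrow> (\<exists>\<sigma> n. x = NVar \<sigma> n)"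

datatype 's tm = Nm "'s name" | Ap "'s tm" "'s tm" | Lm "'s name" "'s tm"

text \<open>Type of a (raw) term; None for ill-typed raw terms. Terms of the paper
are the well-typed raw terms.\<close>
fun tyof :: "'s tm \<Rightarrow> 's ty option" where
  "tyof (Nm x) = Some (nty x)"
| "tyof (Ap s t) = (case tyof s of
      Some (TF \<sigma> \<tau>) \<Rightarrow> (if tyof t = Some \<sigma> then Some \<tau> else None)
    | _ \<Rightarrow> None)"
| "tyof (Lm x t) = (case tyof t of Some \<tau> \<Rightarrow> Some (TF (nty x) \<tau>) | None \<Rightarrow> None)"

definition wt :: "'s tm \<Rightarrow> bool" where
  "wt t \<longleftrightarrow> tyof t \<noteq> None"

definition is_base :: "'s ty \<Rightarrow> bool" where
  "is_base \<sigma> \<longleftrightarrow> \<sigma> = TO \<or> (\<exists>a. \<sigma> = TB a)"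

definition formula :: "'s tm \<Rightarrow> bool" where
  "formula t \<longleftrightarrow> tyof t = Some TO"

fun names_of :: "'s tm \<Rightarrow> 's name set" where
  "names_of (Nm x) = {x}"
| "names_of (Ap s t) = names_of s \<union> names_of t"
| "names_of (Lm x t) = insert x (names_of t)"

definition EFO :: "'s tm \<Rightarrow> bool" where
  "EFO t \<longleftrightarrow> wt t \<and> (\<forall>x \<in> names_of t. is_var x \<or> x = NNeg \<or> x = NImp
        \<or> (\<exists>a. x = NEq (TB a)) \<or> (\<exists>a. x = NAll a))"

definition quasi_EFO :: "'s tm \<Rightarrow> bool" where
  "quasi_EFO t \<longleftrightarrow> formula t \<and> (EFO t \<or>
      (\<exists>\<sigma> s u. t = Ap (Nm NNeg) (Ap (Ap (Nm (NEq \<sigma>)) s) u) \<and> EFO s \<and> EFO u))"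

text \<open>The
conditions below make D(s t) (via app) a subset of the functions D s -> D t.\<close>
record ('s, 'u) frame =
  dom :: "'s ty \<Rightarrow> 'u set"
  app :: "'u \<Rightarrow> 'u \<Rightarrow> 'u"
  tv  :: "bool \<Rightarrow> 'u"

definition is_frame :: "('s, 'u) frame \<Rightarrow> bool" where
  "is_frame F \<longleftrightarrow> (\<forall>\<sigma>. dom F \<sigma> \<noteq> {})
     \<and> (\<forall>\<sigma> \<tau> f a. f \<in> dom F (TF \<sigma> \<tau>) \<longrightarrow> a \<in> dom F \<sigma> \<longrightarrow> app F f a \<in> dom F \<tau>)
     \<and> (\<forall>\<sigma> \<tau> f g. f \<in> dom F (TF \<sigma> \<tau>) \<longrightarrow> g \<in> dom F (TF \<sigma> \<tau>)
            \<longrightarrow> (\<forall>a \<in> dom F \<sigma>. app F f a = app F g a) \<longrightarrow> f = g)"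

definition standard :: "('s, 'u) frame \<Rightarrow> bool" where
  "standard F \<longleftrightarrow> is_frame F \<and> (\<forall>\<sigma> \<tau> h. (\<forall>a \<in> dom F \<sigma>. h a \<in> dom F \<tau>)
       \<longrightarrow> (\<exists>f \<in> dom F (TF \<sigma> \<tau>). \<forall>a \<in> dom F \<sigma>. app F f a = h a))"

definition assignment :: "('s, 'u) frame \<Rightarrow> ('s name \<Rightarrow> 'u) \<Rightarrow> bool" where
  "assignment F I \<longleftrightarrow> is_frame F \<and> (\<forall>x. I x \<in> dom F (nty x))"

fun eval :: "('s, 'u) frame \<Rightarrow> ('s name \<Rightarrow> 'u) \<Rightarrow> 's tm \<Rightarrow> 'u option" where
  "eval F I (Nm x) = Some (I x)"
| "eval F I (Ap s t) = (case (eval F I s, eval F I t) of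
      (Some f, Some a) \<Rightarrow> Some (app F f a) | _ \<Rightarrow> None)"
| "eval F I (Lm x s) = (case tyof s of
      None \<Rightarrow> None
    | Some \<tau> \<Rightarrow>
       (if \<exists>f \<in> dom F (TF (nty x) \<tau>). \<forall>a \<in> dom F (nty x). eval F (I(x := a)) s = Some (app F f a)
        then Some (THE f. f \<in> dom F (TF (nty x) \<tau>) \<and>
                 (\<forall>a \<in> dom F (nty x). eval F (I(x := a)) s = Some (app F f a)))
        else None))"

definition is_interp :: "('s, 'u) frame \<Rightarrow> ('s name \<Rightarrow> 'u) \<Rightarrow> bool" where
  "is_interp F I \<longleftrightarrow> assignment F I \<and> (\<forall>t. wt t \<longrightarrow> eval F I t \<noteq> None)"

definition logical :: "('s, 'u) frame \<Rightarrow> ('s name \<Rightarrow> 'u) \<Rightarrow> bool" where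
  "logical F I \<longleftrightarrow> assignment F I \<and> inj (tv F) \<and> dom F TO = range (tv F)
     \<and> (\<forall>b. app F (I NNeg) (tv F b) = tv F (\<not> b))
     \<and> (\<forall>b c. app F (app F (I NImp) (tv F b)) (tv F c) = tv F (b \<longrightarrow> c))
     \<and> (\<forall>\<sigma>. \<forall>a \<in> dom F \<sigma>. \<forall>b \<in> dom F \<sigma>. app F (app F (I (NEq \<sigma>)) a) b = tv F (a = b))
     \<and> (\<forall>\<alpha>. \<forall>f \<in> dom F (TF (TB \<alpha>) TO).
          app F (I (NAll \<alpha>)) f = tv F (\<forall>a \<in> dom F (TB \<alpha>). app F f a = tv F True))"

definition models :: "('s, 'u) frame \<Rightarrow> ('s name \<Rightarrow> 'u) \<Rightarrow> 's tm set \<Rightarrow> bool" where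
  "models F I A \<longleftrightarrow> (\<forall>s \<in> A. eval F I s = Some (tv F True))"

definition satisfied_in :: "'u itself \<Rightarrow> 's tm set \<Rightarrow> bool" where
  "satisfied_in U A \<longleftrightarrow> (\<exists>(F :: ('s, 'u) frame) I. is_interp F I \<and> logical F I \<and> models F I A)"

definition standard_model :: "('s, 'u) frame \<Rightarrow> ('s name \<Rightarrow> 'u) \<Rightarrow> 's tm set \<Rightarrow> bool" where
  "standard_model F I A \<longleftrightarrow> standard F \<and> logical F I \<and> models F I A"

text \<open>N1--N3 and type preservation; N4 is carrier-dependent and stated for
interpretations over the carrier type 'u.\<close>
definition norm_syntactic :: "('s tm \<Rightarrow> 's tm) \<Rightarrow> bool" where
  "norm_syntactic nf \<longleftrightarrow>
     (\<forall>s. wt s \<longrightarrow> tyof (nf s) = tyof s)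
   \<and> (\<forall>s. wt s \<longrightarrow> nf (nf s) = nf s)
   \<and> (\<forall>s t. wt (Ap s t) \<longrightarrow> nf (Ap (nf s) t) = nf (Ap s t))
   \<and> (\<forall>y ss. wt (foldl Ap (Nm y) ss) \<longrightarrow> (\<exists>\<sigma>. tyof (foldl Ap (Nm y) ss) = Some \<sigma> \<and> is_base \<sigma>)
        \<longrightarrow> nf (foldl Ap (Nm y) ss) = foldl Ap (Nm y) (map nf ss))"

definition norm_sound :: "'u itself \<Rightarrow> ('s tm \<Rightarrow> 's tm) \<Rightarrow> bool" where
  "norm_sound U nf \<longleftrightarrow> (\<forall>(F :: ('s, 'u) frame) I s. is_interp F I \<longrightarrow> wt s
        \<longrightarrow> eval F I (nf s) = eval F I s)"

definition type_pres_subst :: "('s name \<Rightarrow> 's tm option) \<Rightarrow> bool" where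
  "type_pres_subst \<theta> \<longleftrightarrow> (\<forall>x t. \<theta> x = Some t \<longrightarrow> tyof t = Some (nty x))"

definition subst_ok :: "('s tm \<Rightarrow> 's tm) \<Rightarrow> (('s name \<Rightarrow> 's tm option) \<Rightarrow> 's tm \<Rightarrow> 's tm) \<Rightarrow> bool" where
  "subst_ok nf sb \<longleftrightarrow> (\<forall>\<theta>. type_pres_subst \<theta> \<longrightarrow>
       (\<forall>s. wt s \<longrightarrow> tyof (sb \<theta> s) = tyof s)
     \<and> (\<forall>x. sb \<theta> (Nm x) = (case \<theta> x of Some t \<Rightarrow> t | None \<Rightarrow> Nm x))
     \<and> (\<forall>s t. wt (Ap s t) \<longrightarrow> sb \<theta> (Ap s t) = Ap (sb \<theta> s) (sb \<theta> t))
     \<and> (\<forall>x s t. wt (Lm x s) \<longrightarrow> tyof t = Some (nty x)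
          \<longrightarrow> nf (Ap (sb \<theta> (Lm x s)) t) = nf (sb (\<theta>(x \<mapsto> t)) s)))
   \<and> (\<forall>s. wt s \<longrightarrow> nf (sb Map.empty s) = nf s)"

definition EFO_branch :: "('s tm \<Rightarrow> 's tm) \<Rightarrow> 's tm set \<Rightarrow> bool" where
  "EFO_branch nf A \<longleftrightarrow> (\<forall>s \<in> A. quasi_EFO s \<and> nf s = s)"

text \<open>The carrier type 'u is large enough to host a standard frame (with the
two truth values in D o) over any prescribed countable nonempty sort domains.\<close>
definition hosts_standard_frames :: "'u itself \<Rightarrow> 's::countable itself \<Rightarrow> bool" where
  "hosts_standard_frames U S \<longleftrightarrow> (\<forall>c :: 's \<Rightarrow> nat set. (\<forall>a. c a \<noteq> {}) \<longrightarrow>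
     (\<exists>F :: ('s, 'u) frame. standard F \<and> inj (tv F) \<and> dom F TO = range (tv F)
        \<and> (\<forall>a. \<exists>g. bij_betw g (c a) (dom F (TB a)))))"

end

theory Submission
  imports Defs
begin

instance ty :: (countable) countable by countable_datatype
instance name :: (countable) countable by countable_datatype
instance tm :: (countable) countable by countable_datatype

lemma eval_coinc:
  "(\<forall>x\<in>names_of t. J x = J' x) \<Longrightarrow> eval F J t = eval F J' t"
proof (induction t arbitrary: J J')
  case (Nm x) then show ?case by simp
next
  case (Ap s u)
  have "eval F J s = eval F J' s" "eval F J u = eval F J' u" using Ap by auto
  then show ?case by simp
next
  case (Lm x s)
  have h: "\<And>a. eval F (J(x:=a)) s = eval F (J'(x:=a)) s"
    using Lm by (intro Lm.IH) auto
  show ?case unfolding eval.simps h by (rule refl)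
qed

lemma names_finite: "finite (names_of t)"
  by (induction t) auto

lemma eval_Lm_char:
  assumes fr: "is_frame F" and ty: "tyof s = Some \<tau>"
    and f: "f \<in> dom F (TF (nty x) \<tau>)"
    and P: "\<forall>a\<in>dom F (nty x). eval F (J(x:=a)) s = Some (app F f a)"
  shows "eval F J (Lm x s) = Some f"
proof -
  have u: "\<And>g. g \<in> dom F (TF (nty x) \<tau>) \<and>
                 (\<forall>a \<in> dom F (nty x). eval F (J(x := a)) s = Some (app F g a)) \<Longrightarrow> g = f"
  proof -
    fix g assume g: "g \<in> dom F (TF (nty x) \<tau>) \<and>
                 (\<forall>a \<in> dom F (nty x). eval F (J(x := a)) s = Some (app F g a))"
    have "\<forall>a\<in>dom F (nty x). app F g a = app F f a" using g P by force
    then show "g = f" using fr g f unfolding is_frame_def by blast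
  qed
  have "(THE g. g \<in> dom F (TF (nty x) \<tau>) \<and>
                 (\<forall>a \<in> dom F (nty x). eval F (J(x := a)) s = Some (app F g a))) = f"
    using f P u by (intro the_equality) auto
  then show ?thesis using ty f P by auto
qed

lemma eval_Lm_Some:
  assumes fr: "is_frame F" and ty: "tyof s = Some \<tau>"
    and e: "eval F J (Lm x s) = Some f"
  shows "f \<in> dom F (TF (nty x) \<tau>) \<and> (\<forall>a\<in>dom F (nty x). eval F (J(x:=a)) s = Some (app F f a))"
proof -
  from e ty obtain f0 where f0: "f0 \<in> dom F (TF (nty x) \<tau>)"
      "\<forall>a\<in>dom F (nty x). eval F (J(x:=a)) s = Some (app F f0 a)"
    by (auto split: if_splits)
  have "eval F J (Lm x s) = Some f0" using eval_Lm_char[OF fr ty f0] .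
  with e f0 show ?thesis by simp
qed

lemma eval_dom:
  assumes fr: "is_frame F"
  shows "tyof t = Some \<sigma> \<Longrightarrow> (\<forall>x\<in>names_of t. J x \<in> dom F (nty x)) \<Longrightarrow> eval F J t = Some v
     \<Longrightarrow> v \<in> dom F \<sigma>"
proof (induction t arbitrary: J \<sigma> v)
  case (Nm x) then show ?case by auto
next
  case (Ap s u)
  from Ap.prems(1) obtain \<sigma>' where ts: "tyof s = Some (TF \<sigma>' \<sigma>)" and tu: "tyof u = Some \<sigma>'"
    by (auto split: option.splits ty.splits if_splits)
  from Ap.prems(3) obtain f a where ef: "eval F J s = Some f" and ea: "eval F J u = Some a"
      and v: "v = app F f a"
    by (auto split: option.splits)
  have "f \<in> dom F (TF \<sigma>' \<sigma>)" using Ap.IH(1)[OF ts _ ef] Ap.prems(2) by auto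
  moreover have "a \<in> dom F \<sigma>'" using Ap.IH(2)[OF tu _ ea] Ap.prems(2) by auto
  ultimately show ?case using fr v unfolding is_frame_def by blast
next
  case (Lm x s)
  from Lm.prems(1) obtain \<tau> where ts: "tyof s = Some \<tau>" and s: "\<sigma> = TF (nty x) \<tau>"
    by (auto split: option.splits)
  show ?case using eval_Lm_Some[OF fr ts Lm.prems(3)] s by simp
qed

lemma std_total:
  assumes st: "standard F"
  shows "tyof t = Some \<sigma> \<Longrightarrow> (\<forall>x\<in>names_of t. J x \<in> dom F (nty x)) \<Longrightarrow> \<exists>v. eval F J t = Some v"
proof (induction t arbitrary: J \<sigma>)
  case (Nm x) then show ?case by auto
next
  case (Ap s u)
  from Ap.prems(1) obtain \<sigma>' where ts: "tyof s = Some (TF \<sigma>' \<sigma>)" and tu: "tyof u = Some \<sigma>'"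
    by (auto split: option.splits ty.splits if_splits)
  obtain f a where "eval F J s = Some f" "eval F J u = Some a"
    using Ap.IH(1)[OF ts] Ap.IH(2)[OF tu] Ap.prems(2) by fastforce
  then show ?case by simp
next
  case (Lm x s)
  have fr: "is_frame F" using st unfolding standard_def by auto
  from Lm.prems(1) obtain \<tau> where ts: "tyof s = Some \<tau>" and s: "\<sigma> = TF (nty x) \<tau>"
    by (auto split: option.splits)
  have ex: "\<forall>a\<in>dom F (nty x). \<exists>v. eval F (J(x:=a)) s = Some v \<and> v \<in> dom F \<tau>"
  proof
    fix a assume a: "a \<in> dom F (nty x)"
    have n: "\<forall>y\<in>names_of s. (J(x:=a)) y \<in> dom F (nty y)" using a Lm.prems(2) by auto
    obtain v where "eval F (J(x:=a)) s = Some v" using Lm.IH[OF ts n] by blast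
    moreover have "v \<in> dom F \<tau>" using eval_dom[OF fr ts n calculation] .
    ultimately show "\<exists>v. eval F (J(x:=a)) s = Some v \<and> v \<in> dom F \<tau>" by blast
  qed
  define h where "h a = the (eval F (J(x:=a)) s)" for a
  have hd: "\<forall>a\<in>dom F (nty x). h a \<in> dom F \<tau> \<and> eval F (J(x:=a)) s = Some (h a)"
    using ex unfolding h_def by auto
  then obtain f where f: "f \<in> dom F (TF (nty x) \<tau>)" "\<forall>a\<in>dom F (nty x). app F f a = h a"
    using st unfolding standard_def by blast
  have "eval F J (Lm x s) = Some f"
    using eval_Lm_char[OF fr ts f(1)] f(2) hd by auto
  then show ?case by blast
qed

lemma henkin_total_aux:
  assumes fr: "is_frame F"
  shows "eval F K (foldr Lm ns t) \<noteq> None \<Longrightarrow> (\<forall>x\<in>set ns. J x \<in> dom F (nty x))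
    \<Longrightarrow> (\<forall>x. x \<notin> set ns \<longrightarrow> J x = K x) \<Longrightarrow> tyof t \<noteq> None \<Longrightarrow> eval F J t \<noteq> None"
proof (induction ns arbitrary: K)
  case Nil
  then have "J = K" by auto
  then show ?case using Nil by simp
next
  case (Cons n ns)
  have tf: "tyof (foldr Lm ns t) \<noteq> None"
    using Cons.prems(4) by (induction ns) (auto split: option.splits)
  then obtain \<tau> where t\<tau>: "tyof (foldr Lm ns t) = Some \<tau>" by auto
  obtain f where "eval F K (Lm n (foldr Lm ns t)) = Some f" using Cons.prems(1) by auto
  from eval_Lm_Some[OF fr t\<tau> this] Cons.prems(2)
  have "eval F (K(n := J n)) (foldr Lm ns t) \<noteq> None" by auto
  moreover have "\<forall>x. x \<notin> set ns \<longrightarrow> J x = (K(n := J n)) x" using Cons.prems(3) by auto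
  moreover have "\<forall>x\<in>set ns. J x \<in> dom F (nty x)" using Cons.prems(2) by auto
  ultimately show ?case
    using Cons.IH[of "K(n := J n)"] Cons.prems(4) by blast
qed

lemma henkin_total:
  assumes hi: "is_interp F I" and wt: "tyof t \<noteq> None"
    and J: "\<forall>x\<in>names_of t. J x \<in> dom F (nty x)"
  shows "eval F J t \<noteq> None"
proof -
  have fr: "is_frame F" using hi unfolding is_interp_def assignment_def by auto
  obtain ns where ns: "set ns = names_of t" using finite_list[OF names_finite] by blast
  have wtf: "tyof (foldr Lm ns t) \<noteq> None"
    using wt by (induction ns) (auto split: option.splits)
  define J' where "J' x = (if x \<in> names_of t then J x else I x)" for x
  have "eval F I (foldr Lm ns t) \<noteq> None" using hi wtf unfolding is_interp_def wt_def by auto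
  then have "eval F J' t \<noteq> None"
    using henkin_total_aux[OF fr, of I ns t J'] J ns wt unfolding J'_def by auto
  moreover have "eval F J t = eval F J' t" by (rule eval_coinc) (auto simp: J'_def)
  ultimately show ?thesis by simp
qed


definition X0 :: "('s, 'v) frame \<Rightarrow> ('s name \<Rightarrow> 'v) \<Rightarrow> 's ty \<Rightarrow> 'v set" where
  "X0 F I \<sigma> = {I x | x. nty x = \<sigma>} \<union> (if \<sigma> = TO then range (tv F) else {})"

definition evset :: "('s, 'v) frame \<Rightarrow> ('s ty \<Rightarrow> 'v set) \<Rightarrow> 's ty \<Rightarrow> 'v set" where
  "evset F X \<sigma> = {v. \<exists>t J. tyof t = Some \<sigma> \<and> (\<forall>x\<in>names_of t. J x \<in> X (nty x)) \<and> eval F J t = Some v}"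

definition sepw :: "('s, 'v) frame \<Rightarrow> ('s ty \<Rightarrow> 'v set) \<Rightarrow> 's ty \<Rightarrow> 'v set" where
  "sepw F X \<sigma> = (\<lambda>(\<tau>,g,g'). SOME b. b \<in> dom F \<sigma> \<and> app F g b \<noteq> app F g' b) `
      {(\<tau>,g,g'). g \<in> X (TF \<sigma> \<tau>) \<and> g' \<in> X (TF \<sigma> \<tau>) \<and> (\<exists>b\<in>dom F \<sigma>. app F g b \<noteq> app F g' b)}"

definition allw :: "('s, 'v) frame \<Rightarrow> ('s ty \<Rightarrow> 'v set) \<Rightarrow> 's ty \<Rightarrow> 'v set" where
  "allw F X \<sigma> = (\<lambda>g. SOME b. b \<in> dom F \<sigma> \<and> app F g b \<noteq> tv F True) `
      {g. g \<in> X (TF \<sigma> TO) \<and> (\<exists>b\<in>dom F \<sigma>. app F g b \<noteq> tv F True)}"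

definition step :: "('s, 'v) frame \<Rightarrow> ('s ty \<Rightarrow> 'v set) \<Rightarrow> 's ty \<Rightarrow> 'v set" where
  "step F X \<sigma> = X \<sigma> \<union> evset F X \<sigma> \<union> sepw F X \<sigma> \<union> allw F X \<sigma>"

lemma countable_evset:
  fixes X :: "'s::countable ty \<Rightarrow> 'v set"
  assumes c: "\<And>\<sigma>. countable (X \<sigma>)"
  shows "countable (evset F X \<sigma>)"
proof -
  define B where "B = (\<Union>\<sigma>. X \<sigma>)"
  have cB: "countable B" unfolding B_def using c by auto
  define ns where "ns t = (SOME ns. set ns = names_of (t::'s tm))" for t
  have ns: "set (ns t) = names_of t" for t
    unfolding ns_def by (rule someI_ex) (use finite_list[OF names_finite] in blast)
  define K where "K t vs x = (case map_of (zip (ns t) vs) x of Some v \<Rightarrow> v | None \<Rightarrow> (undefined :: 'v))"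
    for t vs and x :: "'s name"
  have "evset F X \<sigma> \<subseteq> (\<Union>t. (\<lambda>vs. the (eval F (K t vs) t)) ` lists B)"
  proof
    fix v assume "v \<in> evset F X \<sigma>"
    then obtain t J where t: "tyof t = Some \<sigma>" "\<forall>x\<in>names_of t. J x \<in> X (nty x)"
       "eval F J t = Some v" unfolding evset_def by blast
    have "eval F (K t (map J (ns t))) t = eval F J t"
      by (rule eval_coinc) (simp add: K_def map_of_zip_map ns)
    have "\<forall>x\<in>names_of t. J x \<in> B"
    proof
      fix x assume "x\<in>names_of t"
      then have "J x \<in> X (nty x)" using t(2) by blast
      then show "J x \<in> B" unfolding B_def by blast
    qed
    then have "map J (ns t) \<in> lists B" using ns by auto
    moreover have "v = the (eval F (K t (map J (ns t))) t)"
      using t(3) \<open>eval F (K t (map J (ns t))) t = eval F J t\<close> by simp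
    ultimately have "v \<in> (\<lambda>vs. the (eval F (K t vs) t)) ` lists B" by (rule rev_image_eqI)
    then show "v \<in> (\<Union>t. (\<lambda>vs. the (eval F (K t vs) t)) ` lists B)" by blast
  qed
  moreover have "countable (\<Union>t. (\<lambda>vs. the (eval F (K t vs) t)) ` lists B)"
    using cB by (intro countable_UN) auto
  ultimately show ?thesis using countable_subset by blast
qed

lemma countable_step:
  fixes X :: "'s::countable ty \<Rightarrow> 'v set"
  assumes c: "\<And>\<sigma>. countable (X \<sigma>)"
  shows "countable (step F X \<sigma>)"
proof -
  define B where "B = (\<Union>\<sigma>. X \<sigma>)"
  have cB: "countable B" unfolding B_def using c by auto
  have "{(\<tau>,g,g'). g \<in> X (TF \<sigma> \<tau>) \<and> g' \<in> X (TF \<sigma> \<tau>) \<and> (\<exists>b\<in>dom F \<sigma>. app F g b \<noteq> app F g' b)}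
     \<subseteq> UNIV \<times> (B \<times> B)" unfolding B_def by auto
  moreover have "countable (UNIV \<times> (B \<times> B) :: ('s ty \<times> 'v \<times> 'v) set)" using cB by auto
  ultimately have "countable (sepw F X \<sigma>)" unfolding sepw_def
    by (meson countable_image countable_subset)
  moreover have "countable (allw F X \<sigma>)" unfolding allw_def
    using c[of "TF \<sigma> TO"] by (intro countable_image) (auto intro: countable_subset)
  ultimately show ?thesis unfolding step_def using c countable_evset[OF c] by auto
qed

locale henk =
  fixes F :: "('s::countable, 'v) frame" and I :: "'s name \<Rightarrow> 'v"
  assumes hi: "is_interp F I" and lg: "logical F I"
begin

lemma fr: "is_frame F" using hi unfolding is_interp_def assignment_def by auto

definition Dn :: "nat \<Rightarrow> 's ty \<Rightarrow> 'v set" where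
  "Dn n = (step F ^^ n) (X0 F I)"

definition DD :: "'s ty \<Rightarrow> 'v set" where
  "DD \<sigma> = (\<Union>n. Dn n \<sigma>)"

lemma Dn_Suc: "Dn (Suc n) = step F (Dn n)" unfolding Dn_def by simp

lemma Dn_mono: "m \<le> n \<Longrightarrow> Dn m \<sigma> \<subseteq> Dn n \<sigma>"
proof (induction n rule: dec_induct)
  case base then show ?case by simp
next
  case (step n) then show ?case unfolding Dn_Suc step_def by auto
qed

lemma Dn_count: "countable (Dn n \<sigma>)"
proof (induction n arbitrary: \<sigma>)
  case 0
  have "{I x | x. nty x = \<sigma>} = I ` {x. nty x = \<sigma>}" by auto
  then show ?case unfolding Dn_def X0_def by auto
next
  case (Suc n) then show ?case unfolding Dn_Suc by (intro countable_step)
qed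

lemma DD_count: "countable (DD \<sigma>)" unfolding DD_def using Dn_count by auto

lemma Dn_dom: "Dn n \<sigma> \<subseteq> dom F \<sigma>"
proof (induction n arbitrary: \<sigma>)
  case 0
  have a: "\<forall>x. I x \<in> dom F (nty x)" using hi unfolding is_interp_def assignment_def by auto
  have b: "dom F TO = range (tv F)" using lg unfolding logical_def by auto
  have "Dn 0 \<sigma> = X0 F I \<sigma>" by (simp add: Dn_def)
  show ?case
  proof
    fix v assume "v \<in> Dn 0 \<sigma>"
    then have "v \<in> X0 F I \<sigma>" using \<open>Dn 0 \<sigma> = X0 F I \<sigma>\<close> by simp
    then have "(\<exists>x. v = I x \<and> nty x = \<sigma>) \<or> (\<sigma> = TO \<and> v \<in> range (tv F))"
      unfolding X0_def by (simp split: if_splits)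
    then show "v \<in> dom F \<sigma>"
    proof
      assume "\<exists>x. v = I x \<and> nty x = \<sigma>"
      then obtain x where "v = I x" "nty x = \<sigma>" by blast
      then show ?thesis using a by auto
    next
      assume "\<sigma> = TO \<and> v \<in> range (tv F)"
      then show ?thesis using b by simp
    qed
  qed
next
  case (Suc n)
  have "evset F (Dn n) \<sigma> \<subseteq> dom F \<sigma>"
  proof
    fix v assume "v \<in> evset F (Dn n) \<sigma>"
    then obtain t J where t: "tyof t = Some \<sigma>" "\<forall>x\<in>names_of t. J x \<in> Dn n (nty x)"
       "eval F J t = Some v" unfolding evset_def by blast
    have "\<forall>x\<in>names_of t. J x \<in> dom F (nty x)"
    proof
      fix x assume "x \<in> names_of t"
      then have "J x \<in> Dn n (nty x)" using t(2) by blast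
      then show "J x \<in> dom F (nty x)" using Suc.IH by blast
    qed
    then show "v \<in> dom F \<sigma>" using eval_dom[OF fr t(1) _ t(3)] by blast
  qed
  moreover have "sepw F (Dn n) \<sigma> \<subseteq> dom F \<sigma>"
  proof
    fix v assume "v \<in> sepw F (Dn n) \<sigma>"
    then obtain \<tau> g g' where ex: "\<exists>b\<in>dom F \<sigma>. app F g b \<noteq> app F g' b"
      and v: "v = (SOME b. b \<in> dom F \<sigma> \<and> app F g b \<noteq> app F g' b)"
      unfolding sepw_def by auto
    have "\<exists>b. b \<in> dom F \<sigma> \<and> app F g b \<noteq> app F g' b" using ex by blast
    from someI_ex[OF this] show "v \<in> dom F \<sigma>" unfolding v[symmetric] by simp
  qed
  moreover have "allw F (Dn n) \<sigma> \<subseteq> dom F \<sigma>"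
  proof
    fix v assume "v \<in> allw F (Dn n) \<sigma>"
    then obtain g where ex: "\<exists>b\<in>dom F \<sigma>. app F g b \<noteq> tv F True"
      and v: "v = (SOME b. b \<in> dom F \<sigma> \<and> app F g b \<noteq> tv F True)"
      unfolding allw_def by auto
    have "\<exists>b. b \<in> dom F \<sigma> \<and> app F g b \<noteq> tv F True" using ex by blast
    from someI_ex[OF this] show "v \<in> dom F \<sigma>" unfolding v[symmetric] by simp
  qed
  ultimately show ?case using Suc.IH unfolding Dn_Suc step_def by blast
qed

lemma DD_dom: "DD \<sigma> \<subseteq> dom F \<sigma>" unfolding DD_def using Dn_dom by auto

lemma X0_DD: "X0 F I \<sigma> \<subseteq> DD \<sigma>" unfolding DD_def Dn_def by (auto intro!: exI[of _ 0])

lemma I_DD: "I x \<in> DD (nty x)" using X0_DD unfolding X0_def by auto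

lemma tv_DD: "tv F b \<in> DD TO" using X0_DD[of TO] unfolding X0_def by auto

lemma DD_fin:
  assumes "finite N" "\<forall>x\<in>N. J x \<in> DD (nty x)"
  shows "\<exists>n. \<forall>x\<in>N. J x \<in> Dn n (nty x)"
  using assms
proof (induction N rule: finite_induct)
  case empty then show ?case by auto
next
  case (insert y N)
  then obtain n where n: "\<forall>x\<in>N. J x \<in> Dn n (nty x)" by auto
  from insert obtain m where m: "J y \<in> Dn m (nty y)" unfolding DD_def by auto
  have "\<forall>x\<in>insert y N. J x \<in> Dn (max n m) (nty x)"
    using n m Dn_mono[of n "max n m"] Dn_mono[of m "max n m"] by fastforce
  then show ?case by blast
qed

lemma DD_eval:
  assumes "tyof t = Some \<sigma>" "\<forall>x\<in>names_of t. J x \<in> DD (nty x)" "eval F J t = Some v"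
  shows "v \<in> DD \<sigma>"
proof -
  obtain n where n: "\<forall>x\<in>names_of t. J x \<in> Dn n (nty x)"
    using DD_fin[OF names_finite assms(2)] by blast
  have "v \<in> evset F (Dn n) \<sigma>" unfolding evset_def using assms n by blast
  then have "v \<in> Dn (Suc n) \<sigma>" unfolding Dn_Suc step_def by auto
  then show ?thesis unfolding DD_def by auto
qed

lemma DD_app:
  assumes "g \<in> DD (TF \<sigma> \<tau>)" "b \<in> DD \<sigma>"
  shows "app F g b \<in> DD \<tau>"
proof -
  define x where "x = NVar (TF \<sigma> \<tau>) 0"
  define y where "y = NVar \<sigma> 1"
  define J where "J = (\<lambda>_. g)(y := b)"
  have xy: "x \<noteq> y" unfolding x_def y_def by simp
  have "eval F J (Ap (Nm x) (Nm y)) = Some (app F g b)" using xy unfolding J_def by simp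
  moreover have "tyof (Ap (Nm x) (Nm y)) = Some \<tau>" unfolding x_def y_def by simp
  moreover have "\<forall>z\<in>names_of (Ap (Nm x) (Nm y)). J z \<in> DD (nty z)"
    using assms xy unfolding J_def x_def y_def by auto
  ultimately show ?thesis using DD_eval by blast
qed

lemma DD_sep:
  assumes g: "g \<in> DD (TF \<sigma> \<tau>)" and g': "g' \<in> DD (TF \<sigma> \<tau>)"
    and eq: "\<forall>b\<in>DD \<sigma>. app F g b = app F g' b"
  shows "g = g'"
proof (rule ccontr)
  assume ne: "g \<noteq> g'"
  obtain n where n: "g \<in> Dn n (TF \<sigma> \<tau>)" "g' \<in> Dn n (TF \<sigma> \<tau>)"
    using DD_fin[of "{NVar (TF \<sigma> \<tau>) 0, NVar (TF \<sigma> \<tau>) 1}"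
        "(\<lambda>_. g)(NVar (TF \<sigma> \<tau>) 1 := g')"] g g' by auto
  have gd: "g \<in> dom F (TF \<sigma> \<tau>)" "g' \<in> dom F (TF \<sigma> \<tau>)" using g g' DD_dom by auto
  have ex: "\<exists>b\<in>dom F \<sigma>. app F g b \<noteq> app F g' b"
    using fr gd ne unfolding is_frame_def by blast
  define b where "b = (SOME b. b \<in> dom F \<sigma> \<and> app F g b \<noteq> app F g' b)"
  have b: "b \<in> dom F \<sigma> \<and> app F g b \<noteq> app F g' b" unfolding b_def
    using ex by (metis (mono_tags, lifting) someI_ex)
  have "b \<in> sepw F (Dn n) \<sigma>" unfolding sepw_def b_def
    using n ex by (intro image_eqI[of _ _ "(\<tau>, g, g')"]) auto
  then have "b \<in> DD \<sigma>" unfolding DD_def Dn_Suc[symmetric] step_def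
    by (auto intro!: exI[of _ "Suc n"] simp: Dn_Suc step_def)
  then show False using eq b by auto
qed

lemma DD_wit:
  assumes g: "g \<in> DD (TF \<sigma> TO)"
    and all: "\<forall>b\<in>DD \<sigma>. app F g b = tv F True"
  shows "\<forall>b\<in>dom F \<sigma>. app F g b = tv F True"
proof (rule ccontr)
  assume "\<not> (\<forall>b\<in>dom F \<sigma>. app F g b = tv F True)"
  then have ex: "\<exists>b\<in>dom F \<sigma>. app F g b \<noteq> tv F True" by blast
  obtain n where n: "g \<in> Dn n (TF \<sigma> TO)" using g unfolding DD_def by auto
  define b where "b = (SOME b. b \<in> dom F \<sigma> \<and> app F g b \<noteq> tv F True)"
  have "\<exists>b. b \<in> dom F \<sigma> \<and> app F g b \<noteq> tv F True" using ex by blast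
  from someI_ex[OF this] have b: "b \<in> dom F \<sigma> \<and> app F g b \<noteq> tv F True"
    unfolding b_def .
  have "g \<in> {g. g \<in> Dn n (TF \<sigma> TO) \<and> (\<exists>b\<in>dom F \<sigma>. app F g b \<noteq> tv F True)}"
    using n ex by blast
  then have "b \<in> allw F (Dn n) \<sigma>" unfolding allw_def b_def by (rule imageI)
  then have "b \<in> Dn (Suc n) \<sigma>" unfolding Dn_Suc step_def by blast
  then have "b \<in> DD \<sigma>" unfolding DD_def by blast
  then show False using all b by blast
qed

end


fun Rel :: "('s, 'u) frame \<Rightarrow> ('s, 'v) frame \<Rightarrow> ('s ty \<Rightarrow> 'v set) \<Rightarrow> ('s \<Rightarrow> 'v \<Rightarrow> 'u)
    \<Rightarrow> 's ty \<Rightarrow> 'u \<Rightarrow> 'v \<Rightarrow> bool" where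
  "Rel FS F D \<psi> TO a b = (\<exists>x. a = tv FS x \<and> b = tv F x)"
| "Rel FS F D \<psi> (TB \<alpha>) a b = (b \<in> D (TB \<alpha>) \<and> a = \<psi> \<alpha> b)"
| "Rel FS F D \<psi> (TF \<sigma> \<tau>) f g = (f \<in> dom FS (TF \<sigma> \<tau>) \<and> g \<in> D (TF \<sigma> \<tau>) \<and>
      (\<forall>a b. Rel FS F D \<psi> \<sigma> a b \<longrightarrow> Rel FS F D \<psi> \<tau> (app FS f a) (app F g b)))"

lemma std_fun1:
  assumes "standard F" "\<forall>a\<in>dom F \<sigma>. h a \<in> dom F \<tau>"
  shows "\<exists>f\<in>dom F (TF \<sigma> \<tau>). \<forall>a\<in>dom F \<sigma>. app F f a = h a"
  using assms unfolding standard_def by blast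

lemma std_fun2:
  assumes st: "standard F" and k: "\<forall>a\<in>dom F \<sigma>. \<forall>b\<in>dom F \<tau>. k a b \<in> dom F \<rho>"
  shows "\<exists>f\<in>dom F (TF \<sigma> (TF \<tau> \<rho>)). \<forall>a\<in>dom F \<sigma>. \<forall>b\<in>dom F \<tau>. app F (app F f a) b = k a b"
proof -
  define h where "h a = (SOME f. f \<in> dom F (TF \<tau> \<rho>) \<and> (\<forall>b\<in>dom F \<tau>. app F f b = k a b))" for a
  have h: "h a \<in> dom F (TF \<tau> \<rho>) \<and> (\<forall>b\<in>dom F \<tau>. app F (h a) b = k a b)" if "a \<in> dom F \<sigma>" for a
  proof -
    have "\<exists>f. f \<in> dom F (TF \<tau> \<rho>) \<and> (\<forall>b\<in>dom F \<tau>. app F f b = k a b)"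
      using std_fun1[OF st, of \<tau> "k a" \<rho>] k that by blast
    from someI_ex[OF this] show ?thesis unfolding h_def .
  qed
  obtain f where f: "f\<in>dom F (TF \<sigma> (TF \<tau> \<rho>))" "\<forall>a\<in>dom F \<sigma>. app F f a = h a"
    using std_fun1[OF st, of \<sigma> h "TF \<tau> \<rho>"] h by blast
  have "\<forall>a\<in>dom F \<sigma>. \<forall>b\<in>dom F \<tau>. app F (app F f a) b = k a b" using f h by auto
  then show ?thesis using f(1) by blast
qed

locale hs = henk F I for F :: "('s::countable, 'v) frame" and I +
  fixes FS :: "('s, 'u) frame" and \<psi> :: "'s \<Rightarrow> 'v \<Rightarrow> 'u"
  assumes st: "standard FS" and tvS: "inj (tv FS)" and domS: "dom FS TO = range (tv FS)"
    and psi: "\<And>\<alpha>. bij_betw (\<psi> \<alpha>) (DD (TB \<alpha>)) (dom FS (TB \<alpha>))"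
begin

abbreviation R where "R \<equiv> Rel FS F DD \<psi>"

lemma frS: "is_frame FS" using st unfolding standard_def by auto

lemma R_props:
  "(\<forall>a b. R \<sigma> a b \<longrightarrow> a \<in> dom FS \<sigma> \<and> b \<in> DD \<sigma>) \<and>
   (\<forall>a b b'. R \<sigma> a b \<longrightarrow> R \<sigma> a b' \<longrightarrow> b = b') \<and>
   (\<forall>b\<in>DD \<sigma>. \<exists>a. R \<sigma> a b)"
proof (induction \<sigma>)
  case TO
  have d: "dom F TO = range (tv F)" using lg unfolding logical_def by auto
  have A: "R TO a b \<Longrightarrow> a \<in> dom FS TO \<and> b \<in> DD TO" for a b using domS tv_DD by auto
  have B: "R TO a b \<Longrightarrow> R TO a b' \<Longrightarrow> b = b'" for a b b' using tvS by (auto dest: injD)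
  have C: "b \<in> DD TO \<Longrightarrow> \<exists>a. R TO a b" for b
  proof -
    assume "b \<in> DD TO"
    then obtain x where "b = tv F x" using DD_dom d by blast
    then show "\<exists>a. R TO a b" by auto
  qed
  show ?case using A B C by blast
next
  case (TB \<alpha>)
  have A: "R (TB \<alpha>) a b \<Longrightarrow> a \<in> dom FS (TB \<alpha>) \<and> b \<in> DD (TB \<alpha>)" for a b
    using psi[of \<alpha>] by (auto simp: bij_betw_def)
  have B: "R (TB \<alpha>) a b \<Longrightarrow> R (TB \<alpha>) a b' \<Longrightarrow> b = b'" for a b b'
    using psi[of \<alpha>] by (auto simp: bij_betw_def dest: inj_onD)
  have C: "b \<in> DD (TB \<alpha>) \<Longrightarrow> \<exists>a. R (TB \<alpha>) a b" for b by auto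
  show ?case using A B C by blast
next
  case (TF \<sigma> \<tau>)
  note IHs = TF.IH(1) and IHt = TF.IH(2)
  have A: "R (TF \<sigma> \<tau>) a b \<Longrightarrow> a \<in> dom FS (TF \<sigma> \<tau>) \<and> b \<in> DD (TF \<sigma> \<tau>)" for a b
    by simp
  have B: "R (TF \<sigma> \<tau>) f g \<Longrightarrow> R (TF \<sigma> \<tau>) f g' \<Longrightarrow> g = g'" for f g g'
  proof -
    assume r: "R (TF \<sigma> \<tau>) f g" "R (TF \<sigma> \<tau>) f g'"
    have "\<forall>b\<in>DD \<sigma>. app F g b = app F g' b"
    proof
      fix b assume "b \<in> DD \<sigma>"
      then obtain a where "R \<sigma> a b" using IHs by blast
      then have "R \<tau> (app FS f a) (app F g b)" "R \<tau> (app FS f a) (app F g' b)" using r by auto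
      then show "app F g b = app F g' b" using IHt by blast
    qed
    then show "g = g'" using DD_sep r by auto
  qed
  have C: "g \<in> DD (TF \<sigma> \<tau>) \<Longrightarrow> \<exists>a. R (TF \<sigma> \<tau>) a g" for g
  proof -
    assume g: "g \<in> DD (TF \<sigma> \<tau>)"
    obtain d0 where d0: "d0 \<in> dom FS \<tau>" using frS unfolding is_frame_def by blast
    define h where "h a = (if \<exists>b. R \<sigma> a b then SOME a'. R \<tau> a' (app F g (THE b. R \<sigma> a b)) else d0)" for a
    have hR: "R \<tau> (h a) (app F g b)" if "R \<sigma> a b" for a b
    proof -
      have tb: "(THE b. R \<sigma> a b) = b" using that IHs by blast
      have "b \<in> DD \<sigma>" using that IHs by blast
      then have "app F g b \<in> DD \<tau>" using DD_app g by blast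
      then have "\<exists>a'. R \<tau> a' (app F g b)" using IHt by blast
      from someI_ex[OF this] show ?thesis unfolding h_def tb using that by auto
    qed
    have "\<forall>a\<in>dom FS \<sigma>. h a \<in> dom FS \<tau>"
    proof
      fix a assume "a \<in> dom FS \<sigma>"
      show "h a \<in> dom FS \<tau>"
      proof (cases "\<exists>b. R \<sigma> a b")
        case True
        then obtain b where "R \<sigma> a b" by blast
        then show ?thesis using hR IHt by blast
      next
        case False
        then have "h a = d0" unfolding h_def by (rule if_not_P)
        then show ?thesis using d0 by simp
      qed
    qed
    then obtain f where f: "f \<in> dom FS (TF \<sigma> \<tau>)" "\<forall>a\<in>dom FS \<sigma>. app FS f a = h a"
      using std_fun1[OF st] by blast
    have "R (TF \<sigma> \<tau>) f g"
      using f g hR IHs by auto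
    then show "\<exists>a. R (TF \<sigma> \<tau>) a g" by blast
  qed
  show ?case using A B C by blast
qed

lemma R_dom: "R \<sigma> a b \<Longrightarrow> a \<in> dom FS \<sigma> \<and> b \<in> DD \<sigma>" using R_props by blast
lemma R_inj: "R \<sigma> a b \<Longrightarrow> R \<sigma> a b' \<Longrightarrow> b = b'" using R_props by blast
lemma R_tot: "b \<in> DD \<sigma> \<Longrightarrow> \<exists>a. R \<sigma> a b" using R_props by blast

lemma FL:
  "tyof t = Some \<sigma> \<Longrightarrow> (\<forall>x\<in>names_of t. R (nty x) (JS x) (JH x)) \<Longrightarrow>
   \<exists>a b. eval FS JS t = Some a \<and> eval F JH t = Some b \<and> R \<sigma> a b"
proof (induction t arbitrary: \<sigma> JS JH)
  case (Nm x) then show ?case by auto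
next
  case (Ap s u)
  from Ap.prems(1) obtain \<sigma>' where ts: "tyof s = Some (TF \<sigma>' \<sigma>)" and tu: "tyof u = Some \<sigma>'"
    by (auto split: option.splits ty.splits if_splits)
  obtain f g where fg: "eval FS JS s = Some f" "eval F JH s = Some g" "R (TF \<sigma>' \<sigma>) f g"
    using Ap.IH(1)[OF ts, of JS JH] Ap.prems(2) by auto
  obtain a b where ab: "eval FS JS u = Some a" "eval F JH u = Some b" "R \<sigma>' a b"
    using Ap.IH(2)[OF tu, of JS JH] Ap.prems(2) by auto
  show ?case using fg ab by auto
next
  case (Lm x s)
  from Lm.prems(1) obtain \<tau> where ts: "tyof s = Some \<tau>" and s: "\<sigma> = TF (nty x) \<tau>"
    by (auto split: option.splits)
  have nS: "\<forall>y\<in>names_of (Lm x s). JS y \<in> dom FS (nty y)" using Lm.prems(2) R_dom by blast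
  have nH: "\<forall>y\<in>names_of (Lm x s). JH y \<in> DD (nty y)" using Lm.prems(2) R_dom by blast
  have tl: "tyof (Lm x s) = Some (TF (nty x) \<tau>)" using ts by simp
  obtain f where ef: "eval FS JS (Lm x s) = Some f" using std_total[OF st tl nS] by blast
  have f: "f \<in> dom FS (TF (nty x) \<tau>)" "\<forall>a\<in>dom FS (nty x). eval FS (JS(x:=a)) s = Some (app FS f a)"
    using eval_Lm_Some[OF frS ts ef] by auto
  have "eval F JH (Lm x s) \<noteq> None"
    using henkin_total[OF hi] tl nH DD_dom by blast
  then obtain g where eg: "eval F JH (Lm x s) = Some g" by blast
  have g: "g \<in> dom F (TF (nty x) \<tau>)" "\<forall>a\<in>dom F (nty x). eval F (JH(x:=a)) s = Some (app F g a)"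
    using eval_Lm_Some[OF fr ts eg] by auto
  have gD: "g \<in> DD (TF (nty x) \<tau>)" using DD_eval[OF tl nH eg] .
  have "R (TF (nty x) \<tau>) f g"
  proof -
    have "R \<tau> (app FS f a) (app F g b)" if r: "R (nty x) a b" for a b
    proof -
      have ad: "a \<in> dom FS (nty x)" and bd: "b \<in> dom F (nty x)" using R_dom[OF r] DD_dom by auto
      have "\<forall>y\<in>names_of s. R (nty y) ((JS(x:=a)) y) ((JH(x:=b)) y)"
        using Lm.prems(2) r by auto
      then obtain a' b' where "eval FS (JS(x:=a)) s = Some a'" "eval F (JH(x:=b)) s = Some b'"
          "R \<tau> a' b'" using Lm.IH[OF ts] by blast
      then show ?thesis using f(2) g(2) ad bd by auto
    qed
    then show ?thesis using f(1) gD by auto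
  qed
  then show ?case using ef eg s by auto
qed


definition IS :: "'s name \<Rightarrow> 'u" where
 "IS x = (case x of
    NNeg \<Rightarrow> (SOME f. f \<in> dom FS (TF TO TO) \<and> (\<forall>b. app FS f (tv FS b) = tv FS (\<not>b)))
  | NImp \<Rightarrow> (SOME f. f \<in> dom FS (TF TO (TF TO TO)) \<and> (\<forall>b c. app FS (app FS f (tv FS b)) (tv FS c) = tv FS (b \<longrightarrow> c)))
  | NEq \<sigma> \<Rightarrow> (SOME f. f \<in> dom FS (TF \<sigma> (TF \<sigma> TO)) \<and> (\<forall>a\<in>dom FS \<sigma>. \<forall>b\<in>dom FS \<sigma>. app FS (app FS f a) b = tv FS (a = b)))
  | NAll \<alpha> \<Rightarrow> (SOME f. f \<in> dom FS (TF (TF (TB \<alpha>) TO) TO) \<and> (\<forall>g\<in>dom FS (TF (TB \<alpha>) TO).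
        app FS f g = tv FS (\<forall>a\<in>dom FS (TB \<alpha>). app FS g a = tv FS True)))
  | NVar \<sigma> n \<Rightarrow> (SOME a. R \<sigma> a (I (NVar \<sigma> n))))"

lemma tvS_eq: "(tv FS b = tv FS c) = (b = c)" using tvS by (auto dest: injD)
lemma tvS_dom: "tv FS b \<in> dom FS TO" using domS by auto

lemma IS_neg: "IS NNeg \<in> dom FS (TF TO TO) \<and> (\<forall>b. app FS (IS NNeg) (tv FS b) = tv FS (\<not>b))"
proof -
  obtain f where f: "f \<in> dom FS (TF TO TO)" "\<forall>a\<in>dom FS TO. app FS f a = tv FS (a \<noteq> tv FS True)"
    using std_fun1[OF st, of TO "\<lambda>a. tv FS (a \<noteq> tv FS True)" TO] tvS_dom by blast
  have "\<forall>b. app FS f (tv FS b) = tv FS (\<not>b)" using f(2) tvS_dom tvS_eq by simp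
  then have "\<exists>f. f \<in> dom FS (TF TO TO) \<and> (\<forall>b. app FS f (tv FS b) = tv FS (\<not>b))" using f(1) by blast
  from someI_ex[OF this] show ?thesis unfolding IS_def by simp
qed

lemma IS_imp: "IS NImp \<in> dom FS (TF TO (TF TO TO)) \<and> (\<forall>b c. app FS (app FS (IS NImp) (tv FS b)) (tv FS c) = tv FS (b \<longrightarrow> c))"
proof -
  obtain f where f: "f \<in> dom FS (TF TO (TF TO TO))"
     "\<forall>a\<in>dom FS TO. \<forall>c\<in>dom FS TO. app FS (app FS f a) c = tv FS (a = tv FS True \<longrightarrow> c = tv FS True)"
    using std_fun2[OF st, of TO TO "\<lambda>a c. tv FS (a = tv FS True \<longrightarrow> c = tv FS True)" TO] tvS_dom by blast
  have "\<forall>b c. app FS (app FS f (tv FS b)) (tv FS c) = tv FS (b \<longrightarrow> c)" using f(2) tvS_dom tvS_eq by simp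
  then have "\<exists>f. f \<in> dom FS (TF TO (TF TO TO)) \<and> (\<forall>b c. app FS (app FS f (tv FS b)) (tv FS c) = tv FS (b \<longrightarrow> c))"
    using f(1) by blast
  from someI_ex[OF this] show ?thesis unfolding IS_def by simp
qed

lemma IS_eq: "IS (NEq \<sigma>) \<in> dom FS (TF \<sigma> (TF \<sigma> TO)) \<and> (\<forall>a\<in>dom FS \<sigma>. \<forall>b\<in>dom FS \<sigma>. app FS (app FS (IS (NEq \<sigma>)) a) b = tv FS (a = b))"
proof -
  have "\<exists>f. f \<in> dom FS (TF \<sigma> (TF \<sigma> TO)) \<and> (\<forall>a\<in>dom FS \<sigma>. \<forall>b\<in>dom FS \<sigma>. app FS (app FS f a) b = tv FS (a = b))"
    using std_fun2[OF st, of \<sigma> \<sigma> "\<lambda>a b. tv FS (a = b)" TO] tvS_dom by blast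
  from someI_ex[OF this] show ?thesis unfolding IS_def by simp
qed

lemma IS_all: "IS (NAll \<alpha>) \<in> dom FS (TF (TF (TB \<alpha>) TO) TO) \<and> (\<forall>g\<in>dom FS (TF (TB \<alpha>) TO).
        app FS (IS (NAll \<alpha>)) g = tv FS (\<forall>a\<in>dom FS (TB \<alpha>). app FS g a = tv FS True))"
proof -
  have "\<exists>f. f \<in> dom FS (TF (TF (TB \<alpha>) TO) TO) \<and> (\<forall>g\<in>dom FS (TF (TB \<alpha>) TO).
        app FS f g = tv FS (\<forall>a\<in>dom FS (TB \<alpha>). app FS g a = tv FS True))"
    using std_fun1[OF st, of "TF (TB \<alpha>) TO" "\<lambda>g. tv FS (\<forall>a\<in>dom FS (TB \<alpha>). app FS g a = tv FS True)" TO]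
      tvS_dom by blast
  from someI_ex[OF this] show ?thesis unfolding IS_def by simp
qed

lemma IS_var: "R \<sigma> (IS (NVar \<sigma> n)) (I (NVar \<sigma> n))"
proof -
  have "\<exists>a. R \<sigma> a (I (NVar \<sigma> n))" using R_tot I_DD[of "NVar \<sigma> n"] by simp
  from someI_ex[OF this] show ?thesis unfolding IS_def by simp
qed

lemma IS_dom: "IS x \<in> dom FS (nty x)"
proof (cases x)
  case NNeg then show ?thesis using IS_neg by simp
next
  case NImp then show ?thesis using IS_imp by simp
next
  case (NEq \<sigma>) then show ?thesis using IS_eq by simp
next
  case (NAll \<alpha>) then show ?thesis using IS_all by simp
next
  case (NVar \<sigma> n) then show ?thesis using IS_var[of \<sigma> n] R_dom by simp
qed

lemma IS_logical: "logical FS IS"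
proof -
  have "assignment FS IS" unfolding assignment_def using frS IS_dom by blast
  moreover have "\<forall>\<sigma>. \<forall>a \<in> dom FS \<sigma>. \<forall>b \<in> dom FS \<sigma>. app FS (app FS (IS (NEq \<sigma>)) a) b = tv FS (a = b)"
    using IS_eq by blast
  moreover have "\<forall>\<alpha>. \<forall>f \<in> dom FS (TF (TB \<alpha>) TO).
          app FS (IS (NAll \<alpha>)) f = tv FS (\<forall>a \<in> dom FS (TB \<alpha>). app FS f a = tv FS True)"
    using IS_all by blast
  ultimately show ?thesis unfolding logical_def using tvS domS IS_neg IS_imp by blast
qed

lemma lgH:
  "\<forall>b. app F (I NNeg) (tv F b) = tv F (\<not> b)"
  "\<forall>b c. app F (app F (I NImp) (tv F b)) (tv F c) = tv F (b \<longrightarrow> c)"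
  "\<forall>\<sigma>. \<forall>a \<in> dom F \<sigma>. \<forall>b \<in> dom F \<sigma>. app F (app F (I (NEq \<sigma>)) a) b = tv F (a = b)"
  "\<forall>\<alpha>. \<forall>f \<in> dom F (TF (TB \<alpha>) TO).
          app F (I (NAll \<alpha>)) f = tv F (\<forall>a \<in> dom F (TB \<alpha>). app F f a = tv F True)"
  "inj (tv F)"
  using lg unfolding logical_def by blast+

lemma R_neg: "R (TF TO TO) (IS NNeg) (I NNeg)"
  using IS_neg I_DD[of NNeg] lgH(1) by auto

lemma R_imp: "R (TF TO (TF TO TO)) (IS NImp) (I NImp)"
proof -
  have "R (TF TO TO) (app FS (IS NImp) a) (app F (I NImp) b)" if "R TO a b" for a b
  proof -
    from that have "\<exists>x. a = tv FS x \<and> b = tv F x" by simp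
    then obtain x where x: "a = tv FS x" "b = tv F x" by blast
    have "app FS (IS NImp) a \<in> dom FS (TF TO TO)"
      using IS_imp frS tvS_dom x unfolding is_frame_def by blast
    moreover have "app F (I NImp) b \<in> DD (TF TO TO)"
      using DD_app I_DD[of NImp] tv_DD x by auto
    ultimately show ?thesis using x IS_imp lgH(2) by auto
  qed
  then show ?thesis using IS_imp I_DD[of NImp] by auto
qed

lemma R_eq: "R (TF (TB \<alpha>) (TF (TB \<alpha>) TO)) (IS (NEq (TB \<alpha>))) (I (NEq (TB \<alpha>)))"
proof -
  have inj: "inj_on (\<psi> \<alpha>) (DD (TB \<alpha>))" and img: "\<psi> \<alpha> ` DD (TB \<alpha>) = dom FS (TB \<alpha>)"
    using psi[of \<alpha>] unfolding bij_betw_def by auto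
  have "R (TF (TB \<alpha>) TO) (app FS (IS (NEq (TB \<alpha>))) a) (app F (I (NEq (TB \<alpha>))) b)"
    if r: "R (TB \<alpha>) a b" for a b
  proof -
    have b: "b \<in> DD (TB \<alpha>)" and a: "a = \<psi> \<alpha> b" using r by auto
    have ad: "a \<in> dom FS (TB \<alpha>)" using a b img by auto
    have "app FS (IS (NEq (TB \<alpha>))) a \<in> dom FS (TF (TB \<alpha>) TO)"
      using IS_eq frS ad unfolding is_frame_def by blast
    moreover have "app F (I (NEq (TB \<alpha>))) b \<in> DD (TF (TB \<alpha>) TO)"
      using DD_app I_DD[of "NEq (TB \<alpha>)"] b by auto
    moreover have "R TO (app FS (app FS (IS (NEq (TB \<alpha>))) a) a') (app F (app F (I (NEq (TB \<alpha>))) b) b')"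
      if r': "R (TB \<alpha>) a' b'" for a' b'
    proof -
      have b': "b' \<in> DD (TB \<alpha>)" and a': "a' = \<psi> \<alpha> b'" using r' by auto
      have ad': "a' \<in> dom FS (TB \<alpha>)" using a' b' img by auto
      have "app FS (app FS (IS (NEq (TB \<alpha>))) a) a' = tv FS (a = a')" using IS_eq ad ad' by blast
      moreover have "app F (app F (I (NEq (TB \<alpha>))) b) b' = tv F (b = b')"
        using lgH(3) b b' DD_dom by blast
      moreover have "(a = a') = (b = b')" using a a' b b' inj by (auto dest: inj_onD)
      ultimately show ?thesis by auto
    qed
    ultimately show ?thesis by auto
  qed
  then show ?thesis using IS_eq I_DD[of "NEq (TB \<alpha>)"] by auto
qed

lemma R_all: "R (TF (TF (TB \<alpha>) TO) TO) (IS (NAll \<alpha>)) (I (NAll \<alpha>))"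
proof -
  have img: "\<psi> \<alpha> ` DD (TB \<alpha>) = dom FS (TB \<alpha>)"
    using psi[of \<alpha>] unfolding bij_betw_def by auto
  have "R TO (app FS (IS (NAll \<alpha>)) gS) (app F (I (NAll \<alpha>)) gH)"
    if r: "R (TF (TB \<alpha>) TO) gS gH" for gS gH
  proof -
    have gS: "gS \<in> dom FS (TF (TB \<alpha>) TO)" and gH: "gH \<in> DD (TF (TB \<alpha>) TO)" using r by auto
    have pt: "(app FS gS (\<psi> \<alpha> b) = tv FS True) = (app F gH b = tv F True)" if b: "b \<in> DD (TB \<alpha>)" for b
    proof -
      have "R (TB \<alpha>) (\<psi> \<alpha> b) b" using b by simp
      then have "R TO (app FS gS (\<psi> \<alpha> b)) (app F gH b)" using r by auto
      then obtain x where "app FS gS (\<psi> \<alpha> b) = tv FS x" "app F gH b = tv F x" by auto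
      then show ?thesis using tvS_eq lgH(5) by (auto dest: injD)
    qed
    have "(\<forall>a\<in>dom FS (TB \<alpha>). app FS gS a = tv FS True) = (\<forall>b\<in>DD (TB \<alpha>). app FS gS (\<psi> \<alpha> b) = tv FS True)"
      unfolding img[symmetric] by blast
    also have "\<dots> = (\<forall>b\<in>DD (TB \<alpha>). app F gH b = tv F True)" using pt by auto
    also have "\<dots> = (\<forall>b\<in>dom F (TB \<alpha>). app F gH b = tv F True)"
      using DD_wit[OF gH] DD_dom by blast
    finally have eq: "(\<forall>a\<in>dom FS (TB \<alpha>). app FS gS a = tv FS True) = (\<forall>b\<in>dom F (TB \<alpha>). app F gH b = tv F True)" .
    have "app FS (IS (NAll \<alpha>)) gS = tv FS (\<forall>a\<in>dom FS (TB \<alpha>). app FS gS a = tv FS True)"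
      using IS_all gS by blast
    moreover have "app F (I (NAll \<alpha>)) gH = tv F (\<forall>b\<in>dom F (TB \<alpha>). app F gH b = tv F True)"
      using lgH(4) gH DD_dom by blast
    ultimately show ?thesis using eq by auto
  qed
  then show ?thesis using IS_all I_DD[of "NAll \<alpha>"] by auto
qed

lemma EFO_R: "EFO t \<Longrightarrow> \<forall>x\<in>names_of t. R (nty x) (IS x) (I x)"
proof
  fix x assume "EFO t" "x \<in> names_of t"
  then have "is_var x \<or> x = NNeg \<or> x = NImp \<or> (\<exists>a. x = NEq (TB a)) \<or> (\<exists>a. x = NAll a)"
    unfolding EFO_def by blast
  then show "R (nty x) (IS x) (I x)"
    using IS_var R_neg R_imp R_eq R_all unfolding is_var_def by auto
qed

end


theorem corollary14p7:
  fixes nf :: "'s::countable tm \<Rightarrow> 's tm"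
    and sb :: "('s name \<Rightarrow> 's tm option) \<Rightarrow> 's tm \<Rightarrow> 's tm"
    and A :: "'s tm set"
  assumes N123: "norm_syntactic nf"
    and N4v: "norm_sound TYPE('v) nf"
    and N4u: "norm_sound TYPE('u) nf"
    and S: "subst_ok nf sb"
    and big: "hosts_standard_frames TYPE('u) TYPE('s)"
    and branch: "EFO_branch nf A"
    and sat: "satisfied_in TYPE('v) A"
  shows "\<exists>(F :: ('s, 'u) frame) I. assignment F I \<and> standard_model F I A
            \<and> (\<forall>\<alpha>. countable (dom F (TB \<alpha>)))"
proof -
  from sat obtain FH :: "('s, 'v) frame" and IH where h: "is_interp FH IH" "logical FH IH" "models FH IH A"
    unfolding satisfied_in_def by blast
  interpret H: henk FH IH using h by unfold_locales
  define c where "c \<alpha> = to_nat_on (H.DD (TB \<alpha>)) ` H.DD (TB \<alpha>)" for \<alpha>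
  have cne: "\<forall>\<alpha>. c \<alpha> \<noteq> {}"
  proof
    fix \<alpha>
    have "IH (NVar (TB \<alpha>) 0) \<in> H.DD (TB \<alpha>)" using H.I_DD[of "NVar (TB \<alpha>) 0"] by simp
    then show "c \<alpha> \<noteq> {}" unfolding c_def by blast
  qed
  obtain FS :: "('s, 'u) frame" where FS: "standard FS" "inj (tv FS)" "dom FS TO = range (tv FS)"
      "\<forall>\<alpha>. \<exists>g. bij_betw g (c \<alpha>) (dom FS (TB \<alpha>))"
    using big cne unfolding hosts_standard_frames_def by blast
  obtain G where G: "\<forall>\<alpha>. bij_betw (G \<alpha>) (c \<alpha>) (dom FS (TB \<alpha>))" using FS(4) by metis
  define \<psi> where "\<psi> \<alpha> = G \<alpha> \<circ> to_nat_on (H.DD (TB \<alpha>))" for \<alpha>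
  have psi: "bij_betw (\<psi> \<alpha>) (H.DD (TB \<alpha>)) (dom FS (TB \<alpha>))" for \<alpha>
  proof -
    have "bij_betw (to_nat_on (H.DD (TB \<alpha>))) (H.DD (TB \<alpha>)) (c \<alpha>)"
      unfolding c_def using inj_on_to_nat_on[OF H.DD_count] by (simp add: bij_betw_def)
    then show ?thesis unfolding \<psi>_def using G bij_betw_trans by blast
  qed
  interpret S: hs FH IH FS \<psi> using FS psi by unfold_locales auto
  have cnt: "countable (dom FS (TB \<alpha>))" for \<alpha>
  proof -
    have "dom FS (TB \<alpha>) = G \<alpha> ` c \<alpha>" using G bij_betw_imp_surj_on by metis
    moreover have "countable (c \<alpha>)" unfolding c_def by simp
    ultimately show ?thesis by simp
  qed
  have mod: "models FS S.IS A" unfolding models_def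
  proof
    fix s assume sA: "s \<in> A"
    have q: "quasi_EFO s" using branch sA unfolding EFO_branch_def by blast
    have evH: "eval FH IH s = Some (tv FH True)" using h(3) sA unfolding models_def by blast
    have ty: "tyof s = Some TO" using q unfolding quasi_EFO_def formula_def by blast
    have injH: "inj (tv FH)" using S.lgH(5) .
    from q consider "EFO s" | \<sigma> s1 u1 where "s = Ap (Nm NNeg) (Ap (Ap (Nm (NEq \<sigma>)) s1) u1)" "EFO s1" "EFO u1"
      unfolding quasi_EFO_def by blast
    then show "eval FS S.IS s = Some (tv FS True)"
    proof cases
      case 1
      obtain a b where ab: "eval FS S.IS s = Some a" "eval FH IH s = Some b" "S.R TO a b"
        using S.FL[OF ty S.EFO_R[OF 1]] by blast
      from ab(3) obtain x where x: "a = tv FS x" "b = tv FH x" by auto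
      have "x = True" using evH ab(2) x injH by (auto dest: injD)
      then show ?thesis using ab(1) x by simp
    next
      case 2
      note sdef = 2(1)
      have t1: "tyof s1 = Some \<sigma>" and t2: "tyof u1 = Some \<sigma>"
        using ty unfolding sdef by (auto split: option.splits ty.splits if_splits)
      obtain a1 b1 where ab1: "eval FS S.IS s1 = Some a1" "eval FH IH s1 = Some b1" "S.R \<sigma> a1 b1"
        using S.FL[OF t1 S.EFO_R[OF 2(2)]] by blast
      obtain a2 b2 where ab2: "eval FS S.IS u1 = Some a2" "eval FH IH u1 = Some b2" "S.R \<sigma> a2 b2"
        using S.FL[OF t2 S.EFO_R[OF 2(3)]] by blast
      have bd: "b1 \<in> dom FH \<sigma>" "b2 \<in> dom FH \<sigma>" using ab1(3) ab2(3) S.R_dom H.DD_dom by blast+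
      have ad: "a1 \<in> dom FS \<sigma>" "a2 \<in> dom FS \<sigma>" using ab1(3) ab2(3) S.R_dom by blast+
      have "eval FH IH s = Some (app FH (IH NNeg) (app FH (app FH (IH (NEq \<sigma>)) b1) b2))"
        unfolding sdef using ab1(2) ab2(2) by simp
      also have "\<dots> = Some (tv FH (b1 \<noteq> b2))" using S.lgH(1) S.lgH(3) bd by simp
      finally have "b1 \<noteq> b2" using evH injH by (auto dest: injD)
      then have "a1 \<noteq> a2" using ab1(3) ab2(3) S.R_inj by blast
      have "eval FS S.IS s = Some (app FS (S.IS NNeg) (app FS (app FS (S.IS (NEq \<sigma>)) a1) a2))"
        unfolding sdef using ab1(1) ab2(1) by simp
      also have "\<dots> = Some (tv FS (a1 \<noteq> a2))" using S.IS_neg S.IS_eq ad by simp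
      finally show ?thesis using \<open>a1 \<noteq> a2\<close> by simp
    qed
  qed
  have "assignment FS S.IS" using S.IS_logical unfolding logical_def by blast
  then show ?thesis using S.IS_logical FS(1) mod cnt unfolding standard_model_def by blast
qed

end
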